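(* Let $c_{gap}(\ell)$ denote the spectral gap of the heat-bath Glauber dynamics for proper $k$-colorings of the complete tree of height $\ell$ with branching factor $b$, whose root is additionally adjacent to an external vertex with a fixed color. Then for every $\ell>0$ and $k\le b+2$, $c_{gap}(\ell)\le c_{gap}(\ell-1)$.
   Context: Spectral gap $c_{gap}=\inf_f\mathcal D(f)/\mathrm{Var}(f)$ over non-constant $f$, with Dirichlet form $\mathcal D(f)=\frac12\sum_{\sigma,\sigma'}(f(\sigma)-f(\sigma'))^2\pi(\sigma)P(\sigma,\sigma')$ and $\mathrm{Var}$ the variance under the stationary distribution $\pi$ (uniform on proper colorings consistent with the fixed external color). The heat-bath Glauber dynamics chooses a uniformly random (non-external) vertex and recolors it uniformly among colors not used by its neighbors. The tree of height $0$ is a single vertex adjacent to the external vertex. *)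

theory Defs
  imports "HOL-Library.FuncSet" Complex_Main
begin

text \<open>Complete tree of height l with branching factor b: vertices are words over
  {0..<b} of length at most l; the root is the empty word, and the children of v
  are v @ [i] for i < b.\<close>
definition tree_verts :: "nat \<Rightarrow> nat \<Rightarrow> nat list set" where
  "tree_verts b l = {v. length v \<le> l \<and> (\<forall>i\<in>set v. i < b)}"

definition tree_adj :: "nat list \<Rightarrow> nat list \<Rightarrow> bool" where
  "tree_adj u v \<longleftrightarrow> (\<exists>i. v = u @ [i]) \<or> (\<exists>i. u = v @ [i])"

text \<open>Proper k-colorings of the tree, where the root is additionally adjacent to an
  external vertex of fixed color c (the external vertex is not part of the state).\<close>
definition colorings :: "nat \<Rightarrow> nat \<Rightarrow> nat \<Rightarrow> nat \<Rightarrow> (nat list \<Rightarrow> nat) set" where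
  "colorings b l k c = {\<sigma> \<in> tree_verts b l \<rightarrow>\<^sub>E {..<k}.
     (\<forall>u\<in>tree_verts b l. \<forall>v\<in>tree_verts b l. tree_adj u v \<longrightarrow> \<sigma> u \<noteq> \<sigma> v) \<and> \<sigma> [] \<noteq> c}"

definition avail :: "nat \<Rightarrow> nat \<Rightarrow> nat \<Rightarrow> nat \<Rightarrow> (nat list \<Rightarrow> nat) \<Rightarrow> nat list \<Rightarrow> nat set" where
  "avail b l k c \<sigma> v = {a \<in> {..<k}. (\<forall>u\<in>tree_verts b l. tree_adj u v \<longrightarrow> \<sigma> u \<noteq> a)
                                    \<and> (v = [] \<longrightarrow> a \<noteq> c)}"

definition glauber :: "nat \<Rightarrow> nat \<Rightarrow> nat \<Rightarrow> nat \<Rightarrow> (nat list \<Rightarrow> nat) \<Rightarrow> (nat list \<Rightarrow> nat) \<Rightarrow> real" where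
  "glauber b l k c \<sigma> \<tau> =
     (1 / real (card (tree_verts b l))) *
     (\<Sum>v\<in>tree_verts b l.
        if (\<forall>u\<in>tree_verts b l. u \<noteq> v \<longrightarrow> \<tau> u = \<sigma> u) \<and> \<tau> v \<in> avail b l k c \<sigma> v
        then 1 / real (card (avail b l k c \<sigma> v)) else 0)"

definition stat_pi :: "nat \<Rightarrow> nat \<Rightarrow> nat \<Rightarrow> nat \<Rightarrow> (nat list \<Rightarrow> nat) \<Rightarrow> real" where
  "stat_pi b l k c \<sigma> = (if \<sigma> \<in> colorings b l k c then 1 / real (card (colorings b l k c)) else 0)"

definition dirichlet :: "nat \<Rightarrow> nat \<Rightarrow> nat \<Rightarrow> nat \<Rightarrow> ((nat list \<Rightarrow> nat) \<Rightarrow> real) \<Rightarrow> real" where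
  "dirichlet b l k c f = (1/2) * (\<Sum>\<sigma>\<in>colorings b l k c. \<Sum>\<tau>\<in>colorings b l k c.
      (f \<sigma> - f \<tau>)^2 * stat_pi b l k c \<sigma> * glauber b l k c \<sigma> \<tau>)"

definition variance_pi :: "nat \<Rightarrow> nat \<Rightarrow> nat \<Rightarrow> nat \<Rightarrow> ((nat list \<Rightarrow> nat) \<Rightarrow> real) \<Rightarrow> real" where
  "variance_pi b l k c f =
     (let m = (\<Sum>\<sigma>\<in>colorings b l k c. stat_pi b l k c \<sigma> * f \<sigma>)
      in (\<Sum>\<sigma>\<in>colorings b l k c. stat_pi b l k c \<sigma> * (f \<sigma> - m)^2))"

definition spectral_gap :: "nat \<Rightarrow> nat \<Rightarrow> nat \<Rightarrow> nat \<Rightarrow> real" where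
  "spectral_gap b l k c = Inf {dirichlet b l k c f / variance_pi b l k c f | f.
      \<exists>\<sigma>\<in>colorings b l k c. \<exists>\<tau>\<in>colorings b l k c. f \<sigma> \<noteq> f \<tau>}"

end

theory Submission
  imports Defs
begin


lemma tv_finite: "finite (tree_verts b l)"
proof -
  have "tree_verts b l \<subseteq> {xs. set xs \<subseteq> {..<b} \<and> length xs \<le> l}"
    unfolding tree_verts_def by auto
  moreover have "finite {xs. set xs \<subseteq> {..<b} \<and> length xs \<le> l}"
    by (rule finite_lists_length_le) simp
  ultimately show ?thesis by (rule finite_subset)
qed

lemma tv_root: "[] \<in> tree_verts b l" by (simp add: tree_verts_def)

lemma tv_mono: "m \<le> l \<Longrightarrow> tree_verts b m \<subseteq> tree_verts b l"
  by (auto simp: tree_verts_def)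

lemma adj_sym: "tree_adj u v = tree_adj v u" by (auto simp: tree_adj_def)
lemma adj_irrefl: "\<not> tree_adj u u" by (auto simp: tree_adj_def)
lemma adj_len: "tree_adj u v \<Longrightarrow> length v = Suc (length u) \<or> length u = Suc (length v)"
  by (auto simp: tree_adj_def)

lemma col_fin: "finite (colorings b l k c)"
proof -
  have "colorings b l k c \<subseteq> tree_verts b l \<rightarrow>\<^sub>E {..<k}" by (auto simp: colorings_def)
  moreover have "finite (tree_verts b l \<rightarrow>\<^sub>E {..<k})" by (intro finite_PiE tv_finite) auto
  ultimately show ?thesis by (rule finite_subset)
qed

locale hb =
  fixes C :: "('v \<Rightarrow> 'c) set" and A :: "('v \<Rightarrow> 'c) \<Rightarrow> 'c set" and v :: 'v
  assumes fin: "finite C"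
  and finA: "\<And>\<sigma>. \<sigma> \<in> C \<Longrightarrow> finite (A \<sigma>)"
  and self: "\<And>\<sigma>. \<sigma> \<in> C \<Longrightarrow> \<sigma> v \<in> A \<sigma>"
  and step: "\<And>\<sigma> a. \<sigma> \<in> C \<Longrightarrow> a \<in> A \<sigma> \<Longrightarrow> \<sigma>(v:=a) \<in> C"
  and stepA: "\<And>\<sigma> a. \<sigma> \<in> C \<Longrightarrow> a \<in> A \<sigma> \<Longrightarrow> A (\<sigma>(v:=a)) = A \<sigma>"
begin

lemma cardA_pos: "\<sigma> \<in> C \<Longrightarrow> card (A \<sigma>) > 0"
  using finA self card_gt_0_iff by blast

lemma swap: "(\<Sum>\<sigma>\<in>C. (\<Sum>a\<in>A \<sigma>. F (\<sigma>(v:=a))) / card (A \<sigma>)) = (\<Sum>\<sigma>\<in>C. (F \<sigma> :: real))"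
proof -
  let ?P = "Sigma C A"
  let ?i = "\<lambda>(\<sigma>,a). (\<sigma>(v:=a), \<sigma> v)"
  have bij: "bij_betw ?i ?P ?P"
    by (rule bij_betw_byWitness[where f'="?i"]) (use step stepA self in auto)
  have "(\<Sum>\<sigma>\<in>C. (\<Sum>a\<in>A \<sigma>. F (\<sigma>(v:=a))) / card (A \<sigma>))
       = (\<Sum>\<sigma>\<in>C. (\<Sum>a\<in>A \<sigma>. F (\<sigma>(v:=a)) / card (A \<sigma>)))"
    by (simp add: sum_divide_distrib)
  also have "\<dots> = (\<Sum>(\<sigma>,a)\<in>?P. F (\<sigma>(v:=a)) / card (A \<sigma>))"
    by (rule sum.Sigma) (use fin finA in auto)
  also have "\<dots> = (\<Sum>p\<in>?P. (\<lambda>(\<sigma>,a). F \<sigma> / card (A \<sigma>)) (?i p))"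
    by (rule sum.cong) (auto simp: stepA)
  also have "\<dots> = (\<Sum>p\<in>?P. (\<lambda>(\<sigma>,a). F \<sigma> / card (A \<sigma>)) p)"
    by (rule sum.reindex_bij_betw[OF bij])
  also have "\<dots> = (\<Sum>\<sigma>\<in>C. (\<Sum>a\<in>A \<sigma>. F \<sigma> / card (A \<sigma>)))"
    by (rule sum.Sigma[symmetric]) (use fin finA in auto)
  also have "\<dots> = (\<Sum>\<sigma>\<in>C. F \<sigma>)"
    by (rule sum.cong) (use cardA_pos in auto)
  finally show ?thesis .
qed

definition M :: "(('v \<Rightarrow> 'c) \<Rightarrow> real) \<Rightarrow> ('v \<Rightarrow> 'c) \<Rightarrow> real" where
  "M g \<sigma> = (\<Sum>a\<in>A \<sigma>. g (\<sigma>(v:=a))) / card (A \<sigma>)"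

definition Q :: "(('v \<Rightarrow> 'c) \<Rightarrow> real) \<Rightarrow> real" where
  "Q g = (\<Sum>\<sigma>\<in>C. (\<Sum>a\<in>A \<sigma>. (g \<sigma> - g (\<sigma>(v:=a)))^2) / card (A \<sigma>))"

lemma M_const: "\<sigma> \<in> C \<Longrightarrow> a \<in> A \<sigma> \<Longrightarrow> M g (\<sigma>(v:=a)) = M g \<sigma>"
  by (simp add: M_def stepA)

lemma cross:
  assumes phi: "\<And>\<sigma> a. \<sigma> \<in> C \<Longrightarrow> a \<in> A \<sigma> \<Longrightarrow> \<phi> (\<sigma>(v:=a)) = \<phi> \<sigma>"
  shows "(\<Sum>\<sigma>\<in>C. (g \<sigma> - \<phi> \<sigma>) * (M g \<sigma> - \<phi> \<sigma>)) = (\<Sum>\<sigma>\<in>C. (M g \<sigma> - \<phi> \<sigma>)^2)"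
proof -
  define \<psi> where "\<psi> \<sigma> = M g \<sigma> - \<phi> \<sigma>" for \<sigma>
  have psi: "\<psi> (\<sigma>(v:=a)) = \<psi> \<sigma>" if "\<sigma> \<in> C" "a \<in> A \<sigma>" for \<sigma> a
    using that phi M_const by (simp add: \<psi>_def)
  have "(\<Sum>\<sigma>\<in>C. M g \<sigma> * \<psi> \<sigma>) = (\<Sum>\<sigma>\<in>C. (\<Sum>a\<in>A \<sigma>. g (\<sigma>(v:=a)) * \<psi> (\<sigma>(v:=a))) / card (A \<sigma>))"
    by (rule sum.cong) (auto simp: M_def psi sum_distrib_right)
  also have "\<dots> = (\<Sum>\<sigma>\<in>C. g \<sigma> * \<psi> \<sigma>)" by (rule swap)
  finally have e: "(\<Sum>\<sigma>\<in>C. M g \<sigma> * \<psi> \<sigma>) = (\<Sum>\<sigma>\<in>C. g \<sigma> * \<psi> \<sigma>)" .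
  have "(\<Sum>\<sigma>\<in>C. (g \<sigma> - \<phi> \<sigma>) * \<psi> \<sigma>) = (\<Sum>\<sigma>\<in>C. g \<sigma> * \<psi> \<sigma>) - (\<Sum>\<sigma>\<in>C. \<phi> \<sigma> * \<psi> \<sigma>)"
    by (simp add: left_diff_distrib sum_subtractf)
  also have "\<dots> = (\<Sum>\<sigma>\<in>C. M g \<sigma> * \<psi> \<sigma>) - (\<Sum>\<sigma>\<in>C. \<phi> \<sigma> * \<psi> \<sigma>)" using e by simp
  also have "\<dots> = (\<Sum>\<sigma>\<in>C. \<psi> \<sigma>^2)"
    by (simp add: \<psi>_def power2_eq_square left_diff_distrib sum_subtractf)
  finally show ?thesis by (simp add: \<psi>_def)
qed

lemma Q_eq:
  assumes phi: "\<And>\<sigma> a. \<sigma> \<in> C \<Longrightarrow> a \<in> A \<sigma> \<Longrightarrow> \<phi> (\<sigma>(v:=a)) = \<phi> \<sigma>"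
  shows "Q g = 2 * (\<Sum>\<sigma>\<in>C. (g \<sigma> - \<phi> \<sigma>)^2) - 2 * (\<Sum>\<sigma>\<in>C. (M g \<sigma> - \<phi> \<sigma>)^2)"
proof -
  have per: "(\<Sum>a\<in>A \<sigma>. (g \<sigma> - g (\<sigma>(v:=a)))^2) / card (A \<sigma>)
     = (g \<sigma> - \<phi> \<sigma>)^2 + (\<Sum>a\<in>A \<sigma>. (g (\<sigma>(v:=a)) - \<phi> (\<sigma>(v:=a)))^2) / card (A \<sigma>)
       - 2 * ((g \<sigma> - \<phi> \<sigma>) * (M g \<sigma> - \<phi> \<sigma>))" if s: "\<sigma> \<in> C" for \<sigma>
  proof -
    define n where "n = real (card (A \<sigma>))"
    have n: "n > 0" using cardA_pos[OF s] by (simp add: n_def)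
    define x where "x = g \<sigma> - \<phi> \<sigma>"
    define y where "y a = g (\<sigma>(v:=a)) - \<phi> \<sigma>" for a
    have 1: "(\<Sum>a\<in>A \<sigma>. (g \<sigma> - g (\<sigma>(v:=a)))^2) = (\<Sum>a\<in>A \<sigma>. x^2 - 2 * x * y a + (y a)^2)"
      by (rule sum.cong) (auto simp: x_def y_def power2_eq_square algebra_simps)
    also have "\<dots> = n * x^2 - 2 * x * (\<Sum>a\<in>A \<sigma>. y a) + (\<Sum>a\<in>A \<sigma>. (y a)^2)"
      by (simp add: sum.distrib sum_subtractf sum_distrib_left n_def)
    finally have 1: "(\<Sum>a\<in>A \<sigma>. (g \<sigma> - g (\<sigma>(v:=a)))^2) = n * x^2 - 2 * x * (\<Sum>a\<in>A \<sigma>. y a) + (\<Sum>a\<in>A \<sigma>. (y a)^2)" .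
    have 2: "(\<Sum>a\<in>A \<sigma>. (g (\<sigma>(v:=a)) - \<phi> (\<sigma>(v:=a)))^2) = (\<Sum>a\<in>A \<sigma>. (y a)^2)"
      by (rule sum.cong) (auto simp: y_def phi s)
    have 3: "M g \<sigma> - \<phi> \<sigma> = (\<Sum>a\<in>A \<sigma>. y a) / n"
      using n by (simp add: M_def y_def sum_subtractf n_def field_simps)
    show ?thesis unfolding 1 2 3 n_def[symmetric] x_def[symmetric] using n
      by (simp add: field_simps power2_eq_square)
  qed
  have "Q g = (\<Sum>\<sigma>\<in>C. (g \<sigma> - \<phi> \<sigma>)^2 + (\<Sum>a\<in>A \<sigma>. (g (\<sigma>(v:=a)) - \<phi> (\<sigma>(v:=a)))^2) / card (A \<sigma>)
       - 2 * ((g \<sigma> - \<phi> \<sigma>) * (M g \<sigma> - \<phi> \<sigma>)))"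
    unfolding Q_def by (rule sum.cong) (auto simp: per)
  also have "\<dots> = (\<Sum>\<sigma>\<in>C. (g \<sigma> - \<phi> \<sigma>)^2) + (\<Sum>\<sigma>\<in>C. (\<Sum>a\<in>A \<sigma>. (g (\<sigma>(v:=a)) - \<phi> (\<sigma>(v:=a)))^2) / card (A \<sigma>))
       - 2 * (\<Sum>\<sigma>\<in>C. (g \<sigma> - \<phi> \<sigma>) * (M g \<sigma> - \<phi> \<sigma>))"
    by (simp add: sum.distrib sum_subtractf sum_distrib_left)
  also have "(\<Sum>\<sigma>\<in>C. (\<Sum>a\<in>A \<sigma>. (g (\<sigma>(v:=a)) - \<phi> (\<sigma>(v:=a)))^2) / card (A \<sigma>)) = (\<Sum>\<sigma>\<in>C. (g \<sigma> - \<phi> \<sigma>)^2)"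
    by (rule swap)
  also note cross[OF phi]
  finally show ?thesis by simp
qed

lemma Q_le:
  assumes "\<And>\<sigma> a. \<sigma> \<in> C \<Longrightarrow> a \<in> A \<sigma> \<Longrightarrow> \<phi> (\<sigma>(v:=a)) = \<phi> \<sigma>"
  shows "Q g \<le> 2 * (\<Sum>\<sigma>\<in>C. (g \<sigma> - \<phi> \<sigma>)^2)"
proof -
  have "0 \<le> (\<Sum>\<sigma>\<in>C. (M g \<sigma> - \<phi> \<sigma>)^2)" by (simp add: sum_nonneg)
  then show ?thesis using Q_eq[OF assms, of g] by linarith
qed

lemma Q_M: "Q g = 2 * (\<Sum>\<sigma>\<in>C. (g \<sigma> - M g \<sigma>)^2)"
  using Q_eq[of "M g" g] M_const by simp

end




lemma tv_Suc: "tree_verts b (Suc m) - tree_verts b m = {w. length w = Suc m \<and> (\<forall>i\<in>set w. i < b)}"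
  by (auto simp: tree_verts_def)

lemma restr_col:
  assumes "\<sigma> \<in> colorings b (Suc m) k c"
  shows "restrict \<sigma> (tree_verts b m) \<in> colorings b m k c"
proof -
  have sub: "tree_verts b m \<subseteq> tree_verts b (Suc m)" by (rule tv_mono) simp
  have c: "\<sigma> \<in> tree_verts b (Suc m) \<rightarrow>\<^sub>E {..<k}"
    and p: "\<forall>u\<in>tree_verts b (Suc m). \<forall>v\<in>tree_verts b (Suc m). tree_adj u v \<longrightarrow> \<sigma> u \<noteq> \<sigma> v"
    and r: "\<sigma> [] \<noteq> c" using assms by (auto simp: colorings_def)
  have "restrict \<sigma> (tree_verts b m) \<in> tree_verts b m \<rightarrow>\<^sub>E {..<k}"
    using c sub by (auto simp: PiE_iff)
  moreover have "\<forall>u\<in>tree_verts b m. \<forall>v\<in>tree_verts b m. tree_adj u v \<longrightarrow> restrict \<sigma> (tree_verts b m) u \<noteq> restrict \<sigma> (tree_verts b m) v"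
    using p sub by auto
  moreover have "restrict \<sigma> (tree_verts b m) [] \<noteq> c" using r tv_root[of b m] by simp
  ultimately show ?thesis unfolding colorings_def by blast
qed

lemma fiber_card:
  assumes s': "\<sigma>' \<in> colorings b m k c"
  shows "card {\<sigma> \<in> colorings b (Suc m) k c. restrict \<sigma> (tree_verts b m) = \<sigma>'}
           = (k - 1) ^ card (tree_verts b (Suc m) - tree_verts b m)"
proof -
  let ?T' = "tree_verts b m" and ?T = "tree_verts b (Suc m)"
  let ?L = "?T - ?T'"
  let ?F = "{\<sigma> \<in> colorings b (Suc m) k c. restrict \<sigma> ?T' = \<sigma>'}"
  let ?P = "PiE ?L (\<lambda>w. {..<k} - {\<sigma>' (butlast w)})"
  let ?e = "\<lambda>\<sigma>. restrict \<sigma> ?L"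
  let ?j = "\<lambda>e u. if u \<in> ?T' then \<sigma>' u else e u"
  have sub: "?T' \<subseteq> ?T" by (rule tv_mono) simp
  have Lw: "w \<in> ?L \<Longrightarrow> length w = Suc m \<and> butlast w \<in> ?T' \<and> w = butlast w @ [last w]" for w
  proof -
    assume w: "w \<in> ?L"
    then have l: "length w = Suc m" and e: "\<forall>i\<in>set w. i < b" by (auto simp: tv_Suc)
    then have ne: "w \<noteq> []" by auto
    have "butlast w \<in> ?T'" using l e by (auto simp: tree_verts_def dest: in_set_butlastD)
    then show ?thesis using l ne append_butlast_last_id by metis
  qed
  have Tl: "u \<in> ?T' \<Longrightarrow> length u \<le> m" for u by (simp add: tree_verts_def)
  have s'c: "\<sigma>' \<in> ?T' \<rightarrow>\<^sub>E {..<k}" and s'p: "\<forall>u\<in>?T'. \<forall>v\<in>?T'. tree_adj u v \<longrightarrow> \<sigma>' u \<noteq> \<sigma>' v"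
    and s'r: "\<sigma>' [] \<noteq> c" using s' by (auto simp: colorings_def)
  have bij: "bij_betw ?e ?F ?P"
  proof (rule bij_betw_byWitness[where f'="?j"])
    show "\<forall>\<sigma>\<in>?F. ?j (?e \<sigma>) = \<sigma>"
    proof
      fix \<sigma> assume "\<sigma> \<in> ?F"
      then have c: "\<sigma> \<in> ?T \<rightarrow>\<^sub>E {..<k}" and r: "restrict \<sigma> ?T' = \<sigma>'" by (auto simp: colorings_def)
      show "?j (?e \<sigma>) = \<sigma>"
      proof
        fix u show "?j (?e \<sigma>) u = \<sigma> u"
          using c r sub by (cases "u \<in> ?T'") (auto simp: PiE_iff extensional_def)
      qed
    qed
    show "\<forall>e\<in>?P. ?e (?j e) = e"
    proof
      fix e assume "e \<in> ?P"
      then show "?e (?j e) = e" by (auto simp: PiE_iff extensional_def)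
    qed
    show "?e ` ?F \<subseteq> ?P"
    proof
      fix x assume "x \<in> ?e ` ?F"
      then obtain \<sigma> where s: "\<sigma> \<in> ?F" and x: "x = ?e \<sigma>" by blast
      then have c: "\<sigma> \<in> ?T \<rightarrow>\<^sub>E {..<k}" and r: "restrict \<sigma> ?T' = \<sigma>'"
        and p: "\<forall>u\<in>?T. \<forall>v\<in>?T. tree_adj u v \<longrightarrow> \<sigma> u \<noteq> \<sigma> v" by (auto simp: colorings_def)
      have "\<sigma> w \<in> {..<k} - {\<sigma>' (butlast w)}" if w: "w \<in> ?L" for w
      proof -
        have "tree_adj (butlast w) w" using Lw[OF w] unfolding tree_adj_def by metis
        moreover have "butlast w \<in> ?T" using Lw[OF w] sub by auto
        ultimately have "\<sigma> (butlast w) \<noteq> \<sigma> w" using p w by auto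
        moreover have "\<sigma>' (butlast w) = \<sigma> (butlast w)" using r Lw[OF w] by (auto dest: fun_cong[of _ _ "butlast w"])
        ultimately show ?thesis using c w by auto
      qed
      then show "x \<in> ?P" using x by auto
    qed
    show "?j ` ?P \<subseteq> ?F"
    proof
      fix x assume "x \<in> ?j ` ?P"
      then obtain e where e: "e \<in> ?P" and x: "x = ?j e" by blast
      have ev: "w \<in> ?L \<Longrightarrow> e w < k \<and> e w \<noteq> \<sigma>' (butlast w)" for w using e by auto
      have eu: "w \<notin> ?L \<Longrightarrow> e w = undefined" for w using e by (auto simp: PiE_iff extensional_def)
      have "x \<in> ?T \<rightarrow>\<^sub>E {..<k}"
        using s'c ev eu sub unfolding x by (auto simp: PiE_iff extensional_def)
      moreover have "x u \<noteq> x v" if u: "u \<in> ?T" and v: "v \<in> ?T" and a: "tree_adj u v" for u v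
      proof (cases "u \<in> ?T'")
        case True note uT = True
        show ?thesis
        proof (cases "v \<in> ?T'")
          case True then show ?thesis using uT s'p a x by auto
        next
          case False
          then have vL: "v \<in> ?L" using v by auto
          have "u = butlast v" using a Lw[OF vL] Tl[OF uT] unfolding tree_adj_def by auto
          then show ?thesis using ev[OF vL] uT False x by auto
        qed
      next
        case False
        then have uL: "u \<in> ?L" using u by auto
        show ?thesis
        proof (cases "v \<in> ?T'")
          case True
          have "v = butlast u" using a Lw[OF uL] Tl[OF True] unfolding tree_adj_def by auto
          then show ?thesis using ev[OF uL] True False x by auto
        next
          case False
          then have "v \<in> ?L" using v by auto
          then show ?thesis using adj_len[OF a] Lw uL by fastforce
        qed
      qed
      moreover have "x [] \<noteq> c" using s'r tv_root[of b m] x by simp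
      moreover have "restrict x ?T' = \<sigma>'" using s'c x by (auto simp: PiE_iff extensional_def)
      ultimately show "x \<in> ?F" by (auto simp: colorings_def)
    qed
  qed
  have "card ?F = card ?P" by (rule bij_betw_same_card[OF bij])
  also have "\<dots> = (\<Prod>w\<in>?L. card ({..<k} - {\<sigma>' (butlast w)}))" by (rule card_PiE) (simp add: tv_finite)
  also have "\<dots> = (\<Prod>w\<in>?L. k - 1)"
  proof (rule prod.cong)
    fix w assume "w \<in> ?L"
    then have "\<sigma>' (butlast w) < k" using Lw s'c by auto
    then show "card ({..<k} - {\<sigma>' (butlast w)}) = k - 1" by simp
  qed simp
  finally show ?thesis by simp
qed

lemma push_sum:
  "(\<Sum>\<sigma>\<in>colorings b (Suc m) k c. h (restrict \<sigma> (tree_verts b m)))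
    = real ((k - 1) ^ card (tree_verts b (Suc m) - tree_verts b m)) * (\<Sum>\<sigma>'\<in>colorings b m k c. (h \<sigma>' :: real))"
proof -
  let ?R = "\<lambda>\<sigma>. restrict \<sigma> (tree_verts b m)"
  have "(\<Sum>\<sigma>\<in>colorings b (Suc m) k c. h (?R \<sigma>))
     = (\<Sum>y\<in>colorings b m k c. \<Sum>\<sigma>\<in>{\<sigma>\<in>colorings b (Suc m) k c. ?R \<sigma> = y}. h (?R \<sigma>))"
    by (rule sum.group[symmetric]) (auto simp: col_fin restr_col)
  also have "\<dots> = (\<Sum>y\<in>colorings b m k c. real ((k - 1) ^ card (tree_verts b (Suc m) - tree_verts b m)) * h y)"
  proof (rule sum.cong)
    fix y assume y: "y \<in> colorings b m k c"
    have "(\<Sum>\<sigma>\<in>{\<sigma>\<in>colorings b (Suc m) k c. ?R \<sigma> = y}. h (?R \<sigma>)) = (\<Sum>\<sigma>\<in>{\<sigma>\<in>colorings b (Suc m) k c. ?R \<sigma> = y}. h y)"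
      by (rule sum.cong) auto
    also have "\<dots> = real (card {\<sigma>\<in>colorings b (Suc m) k c. ?R \<sigma> = y}) * h y" by simp
    finally show "(\<Sum>\<sigma>\<in>{\<sigma>\<in>colorings b (Suc m) k c. ?R \<sigma> = y}. h (?R \<sigma>)) = real ((k - 1) ^ card (tree_verts b (Suc m) - tree_verts b m)) * h y"
      using fiber_card[OF y] by simp
  qed simp
  finally show ?thesis by (simp add: sum_distrib_left)
qed




lemma hb_tree:
  assumes v: "v \<in> tree_verts b l"
  shows "hb (colorings b l k c) (\<lambda>\<sigma>. avail b l k c \<sigma> v) v"
proof
  show "finite (colorings b l k c)" by (rule col_fin)
  fix \<sigma> assume s: "\<sigma> \<in> colorings b l k c"
  then have c: "\<sigma> \<in> tree_verts b l \<rightarrow>\<^sub>E {..<k}"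
    and p: "\<forall>u\<in>tree_verts b l. \<forall>w\<in>tree_verts b l. tree_adj u w \<longrightarrow> \<sigma> u \<noteq> \<sigma> w"
    and r: "\<sigma> [] \<noteq> c" by (auto simp: colorings_def)
  show "finite (avail b l k c \<sigma> v)" unfolding avail_def by simp
  show "\<sigma> v \<in> avail b l k c \<sigma> v" unfolding avail_def using c p r v by auto
  fix a assume a: "a \<in> avail b l k c \<sigma> v"
  then have a1: "a < k" and a2: "\<forall>u\<in>tree_verts b l. tree_adj u v \<longrightarrow> \<sigma> u \<noteq> a"
    and a3: "v = [] \<longrightarrow> a \<noteq> c" by (auto simp: avail_def)
  have "\<sigma>(v:=a) \<in> tree_verts b l \<rightarrow>\<^sub>E {..<k}" using c v a1 by (auto simp: PiE_iff extensional_def)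
  moreover have "(\<sigma>(v:=a)) u \<noteq> (\<sigma>(v:=a)) w" if "u \<in> tree_verts b l" "w \<in> tree_verts b l" "tree_adj u w" for u w
  proof -
    have "u \<noteq> w" using that adj_irrefl by metis
    then show ?thesis using that p a2 adj_sym by (cases "u = v"; cases "w = v") auto
  qed
  moreover have "(\<sigma>(v:=a)) [] \<noteq> c" using r a3 by auto
  ultimately show "\<sigma>(v:=a) \<in> colorings b l k c" unfolding colorings_def by blast
  have "\<And>u. tree_adj u v \<Longrightarrow> (\<sigma>(v:=a)) u = \<sigma> u" using adj_irrefl by fastforce
  then show "avail b l k c (\<sigma>(v:=a)) v = avail b l k c \<sigma> v" unfolding avail_def by auto
qed

lemma recolor_set:
  assumes s: "\<sigma> \<in> colorings b l k c" and v: "v \<in> tree_verts b l"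
  shows "{\<tau> \<in> colorings b l k c. (\<forall>u\<in>tree_verts b l. u \<noteq> v \<longrightarrow> \<tau> u = \<sigma> u) \<and> \<tau> v \<in> avail b l k c \<sigma> v}
         = (\<lambda>a. \<sigma>(v:=a)) ` avail b l k c \<sigma> v"
proof -
  interpret hb "colorings b l k c" "\<lambda>\<sigma>. avail b l k c \<sigma> v" v by (rule hb_tree[OF v])
  show ?thesis
  proof (intro equalityI subsetI)
    fix \<tau> assume "\<tau> \<in> {\<tau> \<in> colorings b l k c. (\<forall>u\<in>tree_verts b l. u \<noteq> v \<longrightarrow> \<tau> u = \<sigma> u) \<and> \<tau> v \<in> avail b l k c \<sigma> v}"
    then have t: "\<tau> \<in> colorings b l k c" and e: "\<forall>u\<in>tree_verts b l. u \<noteq> v \<longrightarrow> \<tau> u = \<sigma> u"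
      and a: "\<tau> v \<in> avail b l k c \<sigma> v" by auto
    have tc: "\<tau> \<in> tree_verts b l \<rightarrow>\<^sub>E {..<k}" and sc: "\<sigma> \<in> tree_verts b l \<rightarrow>\<^sub>E {..<k}"
      using t s by (auto simp: colorings_def)
    have "\<tau> = \<sigma>(v := \<tau> v)"
    proof
      fix u show "\<tau> u = (\<sigma>(v := \<tau> v)) u"
        using e tc sc by (cases "u \<in> tree_verts b l") (auto simp: PiE_iff extensional_def)
    qed
    then show "\<tau> \<in> (\<lambda>a. \<sigma>(v:=a)) ` avail b l k c \<sigma> v" using a by blast
  next
    fix \<tau> assume "\<tau> \<in> (\<lambda>a. \<sigma>(v:=a)) ` avail b l k c \<sigma> v"
    then obtain a where a: "a \<in> avail b l k c \<sigma> v" and t: "\<tau> = \<sigma>(v:=a)" by blast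
    show "\<tau> \<in> {\<tau> \<in> colorings b l k c. (\<forall>u\<in>tree_verts b l. u \<noteq> v \<longrightarrow> \<tau> u = \<sigma> u) \<and> \<tau> v \<in> avail b l k c \<sigma> v}"
      using step[OF s a] a t by auto
  qed
qed

lemma dir_eq:
  "dirichlet b l k c g = (\<Sum>v\<in>tree_verts b l. hb.Q (colorings b l k c) (\<lambda>\<sigma>. avail b l k c \<sigma> v) v g)
      / (2 * real (card (colorings b l k c)) * real (card (tree_verts b l)))"
proof -
  let ?C = "colorings b l k c" and ?T = "tree_verts b l"
  let ?N = "real (card ?C)" and ?n = "real (card ?T)"
  let ?cond = "\<lambda>\<sigma> v \<tau>. (\<forall>u\<in>?T. u \<noteq> v \<longrightarrow> \<tau> u = \<sigma> u) \<and> \<tau> v \<in> avail b l k c \<sigma> v"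
  have inner: "(\<Sum>\<tau>\<in>?C. (g \<sigma> - g \<tau>)^2 * (if ?cond \<sigma> v \<tau> then 1 / real (card (avail b l k c \<sigma> v)) else 0))
     = (\<Sum>a\<in>avail b l k c \<sigma> v. (g \<sigma> - g (\<sigma>(v:=a)))^2) / card (avail b l k c \<sigma> v)"
    if s: "\<sigma> \<in> ?C" and v: "v \<in> ?T" for \<sigma> v
  proof -
    have "(\<Sum>\<tau>\<in>?C. (g \<sigma> - g \<tau>)^2 * (if ?cond \<sigma> v \<tau> then 1 / real (card (avail b l k c \<sigma> v)) else 0))
        = (\<Sum>\<tau>\<in>?C. if ?cond \<sigma> v \<tau> then (g \<sigma> - g \<tau>)^2 / real (card (avail b l k c \<sigma> v)) else 0)"
      by (rule sum.cong) auto
    also have "\<dots> = (\<Sum>\<tau>\<in>{\<tau>\<in>?C. ?cond \<sigma> v \<tau>}. (g \<sigma> - g \<tau>)^2 / real (card (avail b l k c \<sigma> v)))"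
      by (simp add: sum.inter_filter[OF col_fin])
    also have "\<dots> = (\<Sum>\<tau>\<in>(\<lambda>a. \<sigma>(v:=a)) ` avail b l k c \<sigma> v. (g \<sigma> - g \<tau>)^2 / real (card (avail b l k c \<sigma> v)))"
      using recolor_set[OF s v] by simp
    also have "\<dots> = (\<Sum>a\<in>avail b l k c \<sigma> v. (g \<sigma> - g (\<sigma>(v:=a)))^2 / real (card (avail b l k c \<sigma> v)))"
    proof (rule sum.reindex[unfolded comp_def])
      show "inj_on (\<lambda>a. \<sigma>(v:=a)) (avail b l k c \<sigma> v)"
        by (rule inj_onI) (metis fun_upd_same)
    qed
    finally show ?thesis by (simp add: sum_divide_distrib)
  qed
  have "dirichlet b l k c g = (1/2) * (\<Sum>\<sigma>\<in>?C. \<Sum>\<tau>\<in>?C. \<Sum>v\<in>?T.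
      (g \<sigma> - g \<tau>)^2 * (if ?cond \<sigma> v \<tau> then 1 / real (card (avail b l k c \<sigma> v)) else 0) / (?N * ?n))"
    unfolding dirichlet_def glauber_def stat_pi_def
    by (simp add: sum_distrib_left sum_divide_distrib mult.assoc)
  also have "\<dots> = (1/2) * (\<Sum>\<sigma>\<in>?C. \<Sum>v\<in>?T. \<Sum>\<tau>\<in>?C.
      (g \<sigma> - g \<tau>)^2 * (if ?cond \<sigma> v \<tau> then 1 / real (card (avail b l k c \<sigma> v)) else 0) / (?N * ?n))"
    by (simp add: sum.swap[where A = ?C and B = ?T])
  also have "\<dots> = (1/2) * (\<Sum>\<sigma>\<in>?C. \<Sum>v\<in>?T.
      (\<Sum>a\<in>avail b l k c \<sigma> v. (g \<sigma> - g (\<sigma>(v:=a)))^2) / card (avail b l k c \<sigma> v) / (?N * ?n))"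
    by (simp add: inner sum_divide_distrib[symmetric])
  also have "\<dots> = (1/2) * (\<Sum>v\<in>?T. \<Sum>\<sigma>\<in>?C.
      (\<Sum>a\<in>avail b l k c \<sigma> v. (g \<sigma> - g (\<sigma>(v:=a)))^2) / card (avail b l k c \<sigma> v) / (?N * ?n))"
    by (rule arg_cong[where f="\<lambda>x. (1/2) * x"], rule sum.swap)
  also have "\<dots> = (1/2) * (\<Sum>v\<in>?T. hb.Q ?C (\<lambda>\<sigma>. avail b l k c \<sigma> v) v g / (?N * ?n))"
  proof (rule arg_cong[where f="\<lambda>x. (1/2) * x"], rule sum.cong)
    fix v assume v: "v \<in> ?T"
    interpret hb ?C "\<lambda>\<sigma>. avail b l k c \<sigma> v" v by (rule hb_tree[OF v])
    show "(\<Sum>\<sigma>\<in>?C. (\<Sum>a\<in>avail b l k c \<sigma> v. (g \<sigma> - g (\<sigma>(v:=a)))^2) / card (avail b l k c \<sigma> v) / (?N * ?n))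
         = Q g / (?N * ?n)" unfolding Q_def by (rule sum_divide_distrib[symmetric])
  qed simp
  also have "\<dots> = (\<Sum>v\<in>?T. hb.Q ?C (\<lambda>\<sigma>. avail b l k c \<sigma> v) v g) / (2 * ?N * ?n)"
    by (simp add: sum_divide_distrib[symmetric])
  finally show ?thesis .
qed




lemma stat_sum: "(\<Sum>\<sigma>\<in>colorings b l k c. stat_pi b l k c \<sigma> * h \<sigma>) = (\<Sum>\<sigma>\<in>colorings b l k c. h \<sigma>) / card (colorings b l k c)"
  unfolding stat_pi_def by (simp add: sum_divide_distrib)

lemma var_eq: "variance_pi b l k c f =
   (\<Sum>\<sigma>\<in>colorings b l k c. (f \<sigma> - (\<Sum>\<sigma>\<in>colorings b l k c. f \<sigma>) / card (colorings b l k c))^2) / card (colorings b l k c)"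
  unfolding variance_pi_def Let_def stat_sum by simp

lemma Q_nonneg:
  assumes "hb C A v" shows "0 \<le> hb.Q C A v g"
proof -
  interpret hb C A v by (rule assms)
  show ?thesis unfolding Q_def by (intro sum_nonneg divide_nonneg_nonneg) auto
qed

lemma avail_sub:
  assumes v: "v \<in> tree_verts b m" and a: "a \<in> avail b (Suc m) k c \<sigma> v"
  shows "a \<in> avail b m k c (restrict \<sigma> (tree_verts b m)) v"
  using a tv_mono[of m "Suc m" b] v unfolding avail_def by auto

lemma main_cmp:
  fixes f :: "(nat list \<Rightarrow> nat) \<Rightarrow> real"
  assumes s1: "\<sigma>1 \<in> colorings b m k c" and s2: "\<sigma>2 \<in> colorings b m k c" and ne: "f \<sigma>1 \<noteq> f \<sigma>2"
    and ck: "c < k"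
  defines "g \<equiv> \<lambda>\<sigma>. f (restrict \<sigma> (tree_verts b m))"
  shows "variance_pi b (Suc m) k c g = variance_pi b m k c f"
    and "dirichlet b (Suc m) k c g \<le> dirichlet b m k c f"
    and "\<exists>\<sigma>\<in>colorings b (Suc m) k c. \<exists>\<tau>\<in>colorings b (Suc m) k c. g \<sigma> \<noteq> g \<tau>"
proof -
  let ?C = "colorings b (Suc m) k c" and ?C' = "colorings b m k c"
  let ?T = "tree_verts b (Suc m)" and ?T' = "tree_verts b m"
  let ?R = "\<lambda>\<sigma>. restrict \<sigma> ?T'"
  define K where "K = real ((k - 1) ^ card (?T - ?T'))"
  have "\<sigma>1 [] < k" "\<sigma>1 [] \<noteq> c" using s1 tv_root[of b m] by (auto simp: colorings_def)
  then have k2: "k \<ge> 2" using ck by linarith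
  have Kpos: "K > 0" unfolding K_def using k2 by simp
  have push: "(\<Sum>\<sigma>\<in>?C. h (?R \<sigma>)) = K * (\<Sum>\<sigma>'\<in>?C'. h \<sigma>')" for h :: "_ \<Rightarrow> real"
    unfolding K_def by (rule push_sum)
  have NN: "real (card ?C) = K * real (card ?C')" using push[of "\<lambda>_. 1"] by simp
  have N'pos: "real (card ?C') > 0" using s1 col_fin card_gt_0_iff by fastforce
  have Npos: "real (card ?C) > 0" using NN Kpos N'pos by simp
  have mean: "(\<Sum>\<sigma>\<in>?C. g \<sigma>) / card ?C = (\<Sum>\<sigma>\<in>?C'. f \<sigma>) / card ?C'"
    unfolding g_def push NN using Kpos by simp
  define \<mu> where "\<mu> = (\<Sum>\<sigma>\<in>?C'. f \<sigma>) / card ?C'"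
  have "variance_pi b (Suc m) k c g = (\<Sum>\<sigma>\<in>?C. (\<lambda>\<rho>. (f \<rho> - \<mu>)^2) (?R \<sigma>)) / card ?C"
    unfolding var_eq mean \<mu>_def[symmetric] by (simp add: g_def)
  also have "\<dots> = K * (\<Sum>\<sigma>\<in>?C'. (f \<sigma> - \<mu>)^2) / (K * card ?C')"
    unfolding NN using push[of "\<lambda>\<rho>. (f \<rho> - \<mu>)^2"] by simp
  also have "\<dots> = variance_pi b m k c f"
    unfolding var_eq \<mu>_def[symmetric] using Kpos by simp
  finally show "variance_pi b (Suc m) k c g = variance_pi b m k c f" .
  have fib: "\<exists>\<sigma>\<in>?C. ?R \<sigma> = \<sigma>'" if s': "\<sigma>' \<in> ?C'" for \<sigma>'
  proof -
    have "card {\<sigma> \<in> ?C. ?R \<sigma> = \<sigma>'} > 0" unfolding fiber_card[OF s'] using k2 by simp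
    then have "{\<sigma> \<in> ?C. ?R \<sigma> = \<sigma>'} \<noteq> {}" by (metis card.empty less_irrefl)
    then show ?thesis by blast
  qed
  show "\<exists>\<sigma>\<in>?C. \<exists>\<tau>\<in>?C. g \<sigma> \<noteq> g \<tau>"
  proof -
    obtain x where "x \<in> ?C" "?R x = \<sigma>1" using fib[OF s1] by blast
    moreover obtain y where "y \<in> ?C" "?R y = \<sigma>2" using fib[OF s2] by blast
    ultimately show ?thesis using ne unfolding g_def by auto
  qed
  have Qout: "hb.Q ?C (\<lambda>\<sigma>. avail b (Suc m) k c \<sigma> v) v g = 0" if v: "v \<in> ?T - ?T'" for v
  proof -
    interpret hb ?C "\<lambda>\<sigma>. avail b (Suc m) k c \<sigma> v" v by (rule hb_tree) (use v in auto)
    have R: "?R (\<sigma>(v:=a)) = ?R \<sigma>" for \<sigma> a using v by (auto simp: restrict_def)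
    show ?thesis unfolding Q_def g_def by (simp add: R)
  qed
  have Qin: "hb.Q ?C (\<lambda>\<sigma>. avail b (Suc m) k c \<sigma> v) v g \<le> K * hb.Q ?C' (\<lambda>\<sigma>. avail b m k c \<sigma> v) v f"
    if v: "v \<in> ?T'" for v
  proof -
    have vT: "v \<in> ?T" using v tv_mono[of m "Suc m" b] by auto
    interpret H: hb ?C "\<lambda>\<sigma>. avail b (Suc m) k c \<sigma> v" v by (rule hb_tree[OF vT])
    interpret H': hb ?C' "\<lambda>\<sigma>. avail b m k c \<sigma> v" v by (rule hb_tree[OF v])
    define \<phi> where "\<phi> \<sigma> = H'.M f (?R \<sigma>)" for \<sigma>
    have phi: "\<phi> (\<sigma>(v:=a)) = \<phi> \<sigma>" if s: "\<sigma> \<in> ?C" and a: "a \<in> avail b (Suc m) k c \<sigma> v" for \<sigma> a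
    proof -
      have "?R (\<sigma>(v:=a)) = (?R \<sigma>)(v:=a)" using v by (auto simp: restrict_def)
      then show ?thesis unfolding \<phi>_def
        using H'.M_const[OF restr_col[OF s] avail_sub[OF v a]] by simp
    qed
    have "H.Q g \<le> 2 * (\<Sum>\<sigma>\<in>?C. (g \<sigma> - \<phi> \<sigma>)^2)" by (rule H.Q_le[OF phi])
    also have "(\<Sum>\<sigma>\<in>?C. (g \<sigma> - \<phi> \<sigma>)^2) = K * (\<Sum>\<sigma>'\<in>?C'. (f \<sigma>' - H'.M f \<sigma>')^2)"
      unfolding g_def \<phi>_def by (rule push)
    also have "2 * (K * (\<Sum>\<sigma>'\<in>?C'. (f \<sigma>' - H'.M f \<sigma>')^2)) = K * H'.Q f"
      by (simp add: H'.Q_M)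
    finally show ?thesis .
  qed
  have sub: "?T' \<subseteq> ?T" by (rule tv_mono) simp
  have "(\<Sum>v\<in>?T. hb.Q ?C (\<lambda>\<sigma>. avail b (Suc m) k c \<sigma> v) v g)
      = (\<Sum>v\<in>?T'. hb.Q ?C (\<lambda>\<sigma>. avail b (Suc m) k c \<sigma> v) v g)"
    by (rule sum.mono_neutral_right) (use tv_finite sub Qout in auto)
  also have "\<dots> \<le> (\<Sum>v\<in>?T'. K * hb.Q ?C' (\<lambda>\<sigma>. avail b m k c \<sigma> v) v f)"
    by (rule sum_mono) (rule Qin)
  finally have Sle: "(\<Sum>v\<in>?T. hb.Q ?C (\<lambda>\<sigma>. avail b (Suc m) k c \<sigma> v) v g)
     \<le> K * (\<Sum>v\<in>?T'. hb.Q ?C' (\<lambda>\<sigma>. avail b m k c \<sigma> v) v f)" by (simp add: sum_distrib_left)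
  define S' where "S' = (\<Sum>v\<in>?T'. hb.Q ?C' (\<lambda>\<sigma>. avail b m k c \<sigma> v) v f)"
  have S'nn: "S' \<ge> 0" unfolding S'_def by (intro sum_nonneg Q_nonneg hb_tree)
  have n'pos: "real (card ?T') > 0" using tv_root[of b m] tv_finite card_gt_0_iff by fastforce
  have nle: "real (card ?T') \<le> real (card ?T)" using card_mono[OF tv_finite sub] by simp
  have "dirichlet b (Suc m) k c g \<le> K * S' / (2 * real (card ?C) * real (card ?T))"
    unfolding dir_eq S'_def using Sle Npos n'pos nle
    by (intro divide_right_mono) auto
  also have "\<dots> = S' / (2 * real (card ?C') * real (card ?T))" unfolding NN using Kpos by simp
  also have "\<dots> \<le> S' / (2 * real (card ?C') * real (card ?T'))"
    using S'nn N'pos n'pos nle by (intro divide_left_mono) auto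
  also have "\<dots> = dirichlet b m k c f" unfolding dir_eq S'_def ..
  finally show "dirichlet b (Suc m) k c g \<le> dirichlet b m k c f" .
qed




lemma card_push: "real (card (colorings b (Suc m) k c))
   = real ((k - 1) ^ card (tree_verts b (Suc m) - tree_verts b m)) * real (card (colorings b m k c))"
  using push_sum[where h="\<lambda>_. 1" and b=b and m=m and k=k and c=c] by simp

lemma card_ge2:
  assumes "c < k" "k \<ge> 3" shows "card (colorings b m k c) \<ge> 2"
proof (induction m)
  case 0
  let ?h = "\<lambda>a. (\<lambda>u. if u = [] then a else undefined) :: nat list \<Rightarrow> nat"
  have tv0: "tree_verts b 0 = {[]}" by (auto simp: tree_verts_def)
  have sub: "?h ` ({..<k} - {c}) \<subseteq> colorings b 0 k c"
  proof
    fix x assume "x \<in> ?h ` ({..<k} - {c})"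
    then obtain a where a: "a < k" "a \<noteq> c" and x: "x = ?h a" by blast
    have "x \<in> {[]} \<rightarrow>\<^sub>E {..<k}" unfolding x using a by (simp add: PiE_iff extensional_def)
    moreover have "\<forall>u\<in>{[]}. \<forall>v\<in>{[]}. tree_adj u v \<longrightarrow> x u \<noteq> x v" by (simp add: adj_irrefl)
    moreover have "x [] \<noteq> c" using a x by simp
    ultimately show "x \<in> colorings b 0 k c" unfolding colorings_def tv0 by blast
  qed
  have inj: "inj_on ?h ({..<k} - {c})"
  proof (rule inj_onI)
    fix a a' assume "?h a = ?h a'"
    from fun_cong[OF this, of "[]"] show "a = a'" by simp
  qed
  have "card (?h ` ({..<k} - {c})) = k - 1" using card_image[OF inj] assms by simp
  then show ?case using card_mono[OF col_fin sub] assms by simp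
next
  case (Suc m)
  have "real ((k - 1) ^ card (tree_verts b (Suc m) - tree_verts b m)) \<ge> 1" using assms by simp
  then have "real (card (colorings b m k c)) \<le> real (card (colorings b (Suc m) k c))"
    unfolding card_push by (simp add: mult_le_cancel_right1)
  then show ?case using Suc by simp
qed

lemma dir_nonneg: "dirichlet b l k c f \<ge> 0"
  unfolding dir_eq by (intro divide_nonneg_nonneg sum_nonneg Q_nonneg hb_tree) auto

lemma var_nonneg: "variance_pi b l k c f \<ge> 0"
  unfolding var_eq by (intro divide_nonneg_nonneg sum_nonneg) auto

theorem lemma15:
  fixes b k c l :: nat
  assumes "l > 0" and "k \<le> b + 2" and "c < k"
  shows "spectral_gap b l k c \<le> spectral_gap b (l - 1) k c"
proof -
  obtain m where l: "l = Suc m" using assms(1) by (cases l) auto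
  define S where "S n = {dirichlet b n k c f / variance_pi b n k c f | f.
      \<exists>\<sigma>\<in>colorings b n k c. \<exists>\<tau>\<in>colorings b n k c. f \<sigma> \<noteq> f \<tau>}" for n
  have gap: "spectral_gap b n k c = Inf (S n)" for n unfolding spectral_gap_def S_def ..
  have bdd: "bdd_below (S n)" for n
  proof (rule bdd_belowI[where m=0])
    fix x assume "x \<in> S n"
    then obtain f where "x = dirichlet b n k c f / variance_pi b n k c f" unfolding S_def by blast
    then show "0 \<le> x" by (simp add: divide_nonneg_nonneg dir_nonneg var_nonneg)
  qed
  show ?thesis
  proof (cases "S m = {}")
    case False
    have "Inf (S (Suc m)) \<le> Inf (S m)"
    proof (rule cInf_greatest[OF False])
      fix x assume "x \<in> S m"
      then obtain f \<sigma>1 \<sigma>2 where x: "x = dirichlet b m k c f / variance_pi b m k c f"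
        and s1: "\<sigma>1 \<in> colorings b m k c" and s2: "\<sigma>2 \<in> colorings b m k c" and ne: "f \<sigma>1 \<noteq> f \<sigma>2"
        unfolding S_def mem_Collect_eq by blast
      define g where "g = (\<lambda>\<sigma>. f (restrict \<sigma> (tree_verts b m)))"
      have V: "variance_pi b (Suc m) k c g = variance_pi b m k c f"
        unfolding g_def by (rule main_cmp(1)[OF s1 s2 ne assms(3)])
      have D: "dirichlet b (Suc m) k c g \<le> dirichlet b m k c f"
        unfolding g_def by (rule main_cmp(2)[OF s1 s2 ne assms(3)])
      have N: "\<exists>\<sigma>\<in>colorings b (Suc m) k c. \<exists>\<tau>\<in>colorings b (Suc m) k c. g \<sigma> \<noteq> g \<tau>"
        unfolding g_def by (rule main_cmp(3)[OF s1 s2 ne assms(3)])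
      have "dirichlet b (Suc m) k c g / variance_pi b (Suc m) k c g \<in> S (Suc m)"
        unfolding S_def mem_Collect_eq by (rule exI[where x=g]) (use N in simp)
      then have "Inf (S (Suc m)) \<le> dirichlet b (Suc m) k c g / variance_pi b (Suc m) k c g"
        by (rule cInf_lower[OF _ bdd])
      also have "\<dots> \<le> x" unfolding x V using D var_nonneg by (rule divide_right_mono)
      finally show "Inf (S (Suc m)) \<le> x" .
    qed
    then show ?thesis unfolding gap l by simp
  next
    case True
    have one: "\<sigma> = \<tau>" if "\<sigma> \<in> colorings b m k c" "\<tau> \<in> colorings b m k c" for \<sigma> \<tau>
    proof (rule ccontr)
      assume "\<sigma> \<noteq> \<tau>"
      define h where "h = (\<lambda>x. if x = \<sigma> then 1 else 0 :: real)"
      have "h \<sigma> \<noteq> h \<tau>" using \<open>\<sigma> \<noteq> \<tau>\<close> by (simp add: h_def)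
      then have "dirichlet b m k c h / variance_pi b m k c h \<in> S m"
        unfolding S_def mem_Collect_eq by (intro exI[where x=h]) (use that in auto)
      then have "S m \<noteq> {}" by blast
      then show False using True by simp
    qed
    then have c1: "card (colorings b m k c) \<le> 1" using card_le_Suc0_iff_eq[OF col_fin] by auto
    then have k2: "k \<le> 2" using card_ge2[OF assms(3), of b m] by (cases "k \<ge> 3") auto
    have "real ((k - 1) ^ card (tree_verts b (Suc m) - tree_verts b m)) \<le> 1"
      using k2 by (simp add: power_le_one)
    then have "real (card (colorings b (Suc m) k c)) \<le> 1"
      unfolding card_push using c1 by (simp add: mult_le_one)
    then have "card (colorings b (Suc m) k c) \<le> Suc 0" by simp
    then have "\<forall>\<sigma>\<in>colorings b (Suc m) k c. \<forall>\<tau>\<in>colorings b (Suc m) k c. \<sigma> = \<tau>"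
      using card_le_Suc0_iff_eq[OF col_fin] by blast
    then have "S (Suc m) = {}" unfolding S_def by auto
    then show ?thesis unfolding gap l using True by simp
  qed
qed


end
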